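(* In the multi-user imperfect-prediction setting below, for all $\lambda\ge0$, $$g_I^l(\lambda)\le g_I(\lambda)\le g_I^u(\lambda),$$ and consequently $\min_{\lambda\ge0}g_I^l(\lambda)\le\min_{\lambda\ge0}g_I(\lambda)\le\min_{\lambda\ge0}g_I^u(\lambda)$.
   Context: $N$ users; $B>0$; $a_{\max}>0$. User $n$ has arrival rate $a_n\ge0$, true-positive rate $p_n$ and false-negative rate $q_n$ with $0\le q_n<p_n\le1$ and $q_n\le a_n/a_{\max}\le p_n$, $\tilde a_n=\frac{a_n-a_{\max}q_n}{p_n-q_n}$, a probability vector $\boldsymbol\eta_n$ on its channel states, $\beta_n\ge0$, integers $\tau_n\ge1$, $D_n\ge1$, a Markov channel on $\{1,\dots,K_n\}$ with transition matrix $(P_n^{i,j})$, a finite $\mathcal E\subset[0,\infty)$ containing $0$ and a positive element, and $\zeta_n(i,\cdot):\mathcal E\to[0,1]$ with $\zeta_n(i,0)=0$, $\zeta_n(i,e)>0$ for $e>0$, strictly increasing; states totally ordered by $\zeta_n$ (for all $i,j$ either $\zeta_n(i,e)\ge\zeta_n(j,e)\ \forall e$ or $\le\ \forall e$) with extremal states $i_n^{\max},i_n^{\min}$. For $\lambda\ge0$ (all functions depend on $\lambda$): $V_n^l(0)=0$, $V_n^l(\tau)=\max_{e>0}\frac{1-[1-\zeta_n(i_n^{\min},e)]^{\tau}}{\zeta_n(i_n^{\min},e)}[-\lambda e+\zeta_n(i_n^{\min},e)\beta_n]$; $V_n^u(0)=0$, $V_n^u(\tau)=\sum_{z=1}^{\tau}\max_{e}\{-\lambda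 e+\zeta_n(i_n^{\max},e)(\beta_n-\max\{0,V_n^l(z-1)\})\}$; for $\tau_n\le\tau\le\tau_n+D_n$, $\tilde V_n^l(\tau)=\max_{e>0}\{-(1-p_n)\frac{1-[1-\zeta_n(i_n^{\min},e)]^{\tau-\tau_n}}{\zeta_n(i_n^{\min},e)}\lambda e+p_n\frac{1-[1-\zeta_n(i_n^{\min},e)]^{\tau}}{\zeta_n(i_n^{\min},e)}[-\lambda e+\zeta_n(i_n^{\min},e)\beta_n]\}$ and $\tilde V_n^u(\tau)=\sum_{z=\tau_n+1}^{\tau}\max_e\{-\lambda e+\zeta_n(i_n^{\max},e)(p_n\beta_n-\max\{0,\tilde V_n^l(\tau_n),\tilde V_n^l(z-1)\})\}+p_n\sum_{z=1}^{\tau_n}\max_e\{-\lambda e+\zeta_n(i_n^{\max},e)(\beta_n-\max\{0,V_n^l(z-1)\})\}$ (maxima over $e\in\mathcal E$). The imperfect-prediction value function $V_n^I$: $V_n^I(0,0,i)=0$; $V_n^I(0,\tau,i)=\max_e\{-\lambda e+\zeta_n(i,e)\beta_n+(1-\zeta_n(i,e))\sum_jP_n^{i,j}V_n^I(0,\tau-1,j)\}$ for $1\le\tau\le\tau_n$; $V_n^I(0,\tau_n+1,i)=\max_e\{-\lambda e+\zeta_n(i,e)p_n\beta_n+p_n(1-\zeta_n(i,e))\sum_jP_n^{i,j}V_n^I(0,\tau_n,j)\}$; $V_n^I(0,\tau,i)=\max_e\{-\lambda e+\zeta_n(i,e)p_n\beta_n+(1-\zeta_n(i,e))\sum_jP_n^{i,j}V_n^I(0,\tau-1,j)\}$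 for $\tau_n+2\le\tau\le\tau_n+D_n$. Define $g_I(\lambda)=\lambda B+\sum_n\big[\tilde a_n\sum_i\eta_n^iV_n^I(0,\tau_n+D_n,i)+(a_{\max}-\tilde a_n)q_n\sum_i\eta_n^iV_n^I(0,\tau_n,i)\big]$, $g_I^u(\lambda)=\lambda B+\sum_n\{\tilde a_n\min[p_n\beta_n,\tilde V_n^u(\tau_n+D_n)]+(a_{\max}-\tilde a_n)q_n\min[\beta_n,V_n^u(\tau_n)]\}$, $g_I^l(\lambda)=\lambda B+\sum_n\{\tilde a_n\max[0,\tilde V_n^l(\tau_n),\tilde V_n^l(\tau_n+D_n)]+(a_{\max}-\tilde a_n)q_n\max[0,V_n^l(\tau_n)]\}$. $g_I$ is the Lagrange dual function with imperfect prediction. *)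

theory Defs
  imports Complex_Main
begin

text \<open>Conventions: users are indexed by n < N; channel states of user n are 1..K n.
  For a single user, zmin and zmax denote e |-> zeta_n(i_min,e) and e |-> zeta_n(i_max,e);
  E is the finite energy set.\<close>

definition geomf :: "real \<Rightarrow> nat \<Rightarrow> real" where
  "geomf z t = (1 - (1 - z) ^ t) / z"

definition Vl :: "real set \<Rightarrow> (real \<Rightarrow> real) \<Rightarrow> real \<Rightarrow> real \<Rightarrow> nat \<Rightarrow> real" where
  "Vl E zmin lam beta t = (if t = 0 then 0 else
     Max ((\<lambda>e. geomf (zmin e) t * (- lam * e + zmin e * beta)) ` {e\<in>E. 0 < e}))"

definition Vu :: "real set \<Rightarrow> (real \<Rightarrow> real) \<Rightarrow> (real \<Rightarrow> real) \<Rightarrow> real \<Rightarrow> real \<Rightarrow> nat \<Rightarrow> real" where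
  "Vu E zmax zmin lam beta t = (\<Sum>z=1..t.
     Max ((\<lambda>e. - lam * e + zmax e * (beta - max 0 (Vl E zmin lam beta (z - 1)))) ` E))"

definition Vtl :: "real set \<Rightarrow> (real \<Rightarrow> real) \<Rightarrow> real \<Rightarrow> real \<Rightarrow> real \<Rightarrow> nat \<Rightarrow> nat \<Rightarrow> real" where
  "Vtl E zmin lam p beta tn t =
     Max ((\<lambda>e. - (1 - p) * geomf (zmin e) (t - tn) * lam * e
               + p * geomf (zmin e) t * (- lam * e + zmin e * beta)) ` {e\<in>E. 0 < e})"

definition Vtu :: "real set \<Rightarrow> (real \<Rightarrow> real) \<Rightarrow> (real \<Rightarrow> real) \<Rightarrow> real \<Rightarrow> real \<Rightarrow> real \<Rightarrow> nat \<Rightarrow> nat \<Rightarrow> real" where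
  "Vtu E zmax zmin lam p beta tn t =
     (\<Sum>z=tn+1..t. Max ((\<lambda>e. - lam * e + zmax e *
         (p * beta - max 0 (max (Vtl E zmin lam p beta tn tn) (Vtl E zmin lam p beta tn (z - 1))))) ` E))
     + p * (\<Sum>z=1..tn. Max ((\<lambda>e. - lam * e + zmax e * (beta - max 0 (Vl E zmin lam beta (z - 1)))) ` E))"

text \<open>Imperfect-prediction value function of one user: VI ... t i = V_n^I(0,t,i).
  zeta i e = zeta_n(i,e), P i j = P_n^{i,j}, K = K_n, tn = tau_n.
  The recursion agrees with the paper's for all t \<le> tau_n + D_n.\<close>
primrec VI :: "real set \<Rightarrow> (nat \<Rightarrow> real \<Rightarrow> real) \<Rightarrow> (nat \<Rightarrow> nat \<Rightarrow> real) \<Rightarrow> nat \<Rightarrow> real \<Rightarrow> real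
                \<Rightarrow> real \<Rightarrow> nat \<Rightarrow> nat \<Rightarrow> nat \<Rightarrow> real" where
  "VI E zeta P K lam p beta tn 0 = (\<lambda>i. 0)"
| "VI E zeta P K lam p beta tn (Suc t) = (\<lambda>i.
     Max ((\<lambda>e. - lam * e + zeta i e * (if Suc t \<le> tn then beta else p * beta)
              + (if Suc t = tn + 1 then p else 1) * (1 - zeta i e)
                * (\<Sum>j=1..K. P i j * VI E zeta P K lam p beta tn t j)) ` E))"

definition atil :: "real \<Rightarrow> real \<Rightarrow> real \<Rightarrow> real \<Rightarrow> real" where
  "atil amax a p q = (a - amax * q) / (p - q)"

definition gI :: "nat \<Rightarrow> real \<Rightarrow> real \<Rightarrow> (nat \<Rightarrow> real) \<Rightarrow> (nat \<Rightarrow> real) \<Rightarrow> (nat \<Rightarrow> real)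
   \<Rightarrow> (nat \<Rightarrow> nat \<Rightarrow> real) \<Rightarrow> (nat \<Rightarrow> real) \<Rightarrow> (nat \<Rightarrow> nat) \<Rightarrow> (nat \<Rightarrow> nat) \<Rightarrow> (nat \<Rightarrow> nat)
   \<Rightarrow> (nat \<Rightarrow> nat \<Rightarrow> nat \<Rightarrow> real) \<Rightarrow> real set \<Rightarrow> (nat \<Rightarrow> nat \<Rightarrow> real \<Rightarrow> real) \<Rightarrow> real \<Rightarrow> real" where
  "gI N B amax a p q eta beta tau D K P E zeta lam = lam * B + (\<Sum>n<N.
     atil amax (a n) (p n) (q n) * (\<Sum>i=1..K n. eta n i * VI E (zeta n) (P n) (K n) lam (p n) (beta n) (tau n) (tau n + D n) i)
     + (amax - atil amax (a n) (p n) (q n)) * q n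
         * (\<Sum>i=1..K n. eta n i * VI E (zeta n) (P n) (K n) lam (p n) (beta n) (tau n) (tau n) i))"

definition gIu :: "nat \<Rightarrow> real \<Rightarrow> real \<Rightarrow> (nat \<Rightarrow> real) \<Rightarrow> (nat \<Rightarrow> real) \<Rightarrow> (nat \<Rightarrow> real)
   \<Rightarrow> (nat \<Rightarrow> real) \<Rightarrow> (nat \<Rightarrow> nat) \<Rightarrow> (nat \<Rightarrow> nat) \<Rightarrow> real set \<Rightarrow> (nat \<Rightarrow> nat \<Rightarrow> real \<Rightarrow> real)
   \<Rightarrow> (nat \<Rightarrow> nat) \<Rightarrow> (nat \<Rightarrow> nat) \<Rightarrow> real \<Rightarrow> real" where
  "gIu N B amax a p q beta tau D E zeta imin imax lam = lam * B + (\<Sum>n<N.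
     atil amax (a n) (p n) (q n) * min (p n * beta n)
        (Vtu E (zeta n (imax n)) (zeta n (imin n)) lam (p n) (beta n) (tau n) (tau n + D n))
     + (amax - atil amax (a n) (p n) (q n)) * q n
        * min (beta n) (Vu E (zeta n (imax n)) (zeta n (imin n)) lam (beta n) (tau n)))"

definition gIl :: "nat \<Rightarrow> real \<Rightarrow> real \<Rightarrow> (nat \<Rightarrow> real) \<Rightarrow> (nat \<Rightarrow> real) \<Rightarrow> (nat \<Rightarrow> real)
   \<Rightarrow> (nat \<Rightarrow> real) \<Rightarrow> (nat \<Rightarrow> nat) \<Rightarrow> (nat \<Rightarrow> nat) \<Rightarrow> real set \<Rightarrow> (nat \<Rightarrow> nat \<Rightarrow> real \<Rightarrow> real)
   \<Rightarrow> (nat \<Rightarrow> nat) \<Rightarrow> real \<Rightarrow> real" where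
  "gIl N B amax a p q beta tau D E zeta imin lam = lam * B + (\<Sum>n<N.
     atil amax (a n) (p n) (q n) * max 0 (max
        (Vtl E (zeta n (imin n)) lam (p n) (beta n) (tau n) (tau n))
        (Vtl E (zeta n (imin n)) lam (p n) (beta n) (tau n) (tau n + D n)))
     + (amax - atil amax (a n) (p n) (q n)) * q n
        * max 0 (Vl E (zeta n (imin n)) lam (beta n) (tau n)))"

end

theory Submission
  imports Defs
begin

lemma geomf_Suc: "z \<noteq> 0 \<Longrightarrow> geomf z (Suc t) = 1 + (1 - z) * geomf z t"
  unfolding geomf_def by (simp add: field_simps)

lemma geomf_0[simp]: "geomf z 0 = 0" unfolding geomf_def by simp

locale usr =
  fixes E :: "real set" and Z :: "nat \<Rightarrow> real \<Rightarrow> real" and P :: "nat \<Rightarrow> nat \<Rightarrow> real" and K :: nat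
    and lam p beta :: real and tn imin imax :: nat
  assumes fin: "finite E" and Enn: "\<And>e. e\<in>E \<Longrightarrow> 0 \<le> e" and E0: "0 \<in> E" and Epos: "\<exists>e\<in>E. e>0"
   and lam: "0 \<le> lam" and p0: "0 \<le> p" and p1: "p \<le> 1" and b0: "0 \<le> beta" and tn1: "1 \<le> tn"
   and Pnn: "\<And>i j. i\<in>{1..K} \<Longrightarrow> j\<in>{1..K} \<Longrightarrow> 0 \<le> P i j"
   and Psum: "\<And>i. i\<in>{1..K} \<Longrightarrow> (\<Sum>j=1..K. P i j) = 1"
   and Zr: "\<And>i e. i\<in>{1..K} \<Longrightarrow> e\<in>E \<Longrightarrow> 0 \<le> Z i e \<and> Z i e \<le> 1"
   and Z0: "\<And>i. i \<in>{1..K} \<Longrightarrow> Z i 0 = 0"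
   and Zpos: "\<And>i e. i\<in>{1..K} \<Longrightarrow> e\<in>E \<Longrightarrow> 0<e \<Longrightarrow> 0 < Z i e"
   and imax_in: "imax \<in> {1..K}" and imin_in: "imin \<in> {1..K}"
   and imax_max: "\<And>i e. i\<in>{1..K} \<Longrightarrow> e\<in>E \<Longrightarrow> Z i e \<le> Z imax e"
   and imin_min: "\<And>i e. i\<in>{1..K} \<Longrightarrow> e\<in>E \<Longrightarrow> Z imin e \<le> Z i e"
begin

abbreviation V where "V t i \<equiv> VI E Z P K lam p beta tn t i"
abbreviation W where "W t i \<equiv> (\<Sum>j=1..K. P i j * V t j)"

lemma Vsuc_ge: "e \<in> E \<Longrightarrow> -lam*e + Z i e * (if Suc t \<le> tn then beta else p*beta)
   + (if Suc t = tn+1 then p else 1)*(1 - Z i e)*W t i \<le> V (Suc t) i"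
  using fin by (auto intro!: Max_ge)

lemma Vsuc_le: "(\<And>e. e\<in>E \<Longrightarrow> -lam*e + Z i e * (if Suc t \<le> tn then beta else p*beta)
   + (if Suc t = tn+1 then p else 1)*(1 - Z i e)*W t i \<le> b) \<Longrightarrow> V (Suc t) i \<le> b"
  using fin E0 by (auto intro!: Max.boundedI)

lemma wsum_ge: "i\<in>{1..K} \<Longrightarrow> (\<And>j. j\<in>{1..K} \<Longrightarrow> lo \<le> f j) \<Longrightarrow> lo \<le> (\<Sum>j=1..K. P i j * f j)"
proof -
  assume i: "i\<in>{1..K}" and h: "\<And>j. j\<in>{1..K} \<Longrightarrow> lo \<le> f j"
  have "lo = (\<Sum>j=1..K. P i j * lo)" using Psum[OF i] by (simp add: sum_distrib_right[symmetric])
  also have "\<dots> \<le> (\<Sum>j=1..K. P i j * f j)"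
    by (rule sum_mono) (use h Pnn[OF i] in \<open>auto intro: mult_left_mono\<close>)
  finally show ?thesis .
qed

lemma wsum_le: "i\<in>{1..K} \<Longrightarrow> (\<And>j. j\<in>{1..K} \<Longrightarrow> f j \<le> hi) \<Longrightarrow> (\<Sum>j=1..K. P i j * f j) \<le> hi"
proof -
  assume i: "i\<in>{1..K}" and h: "\<And>j. j\<in>{1..K} \<Longrightarrow> f j \<le> hi"
  have "(\<Sum>j=1..K. P i j * f j) \<le> (\<Sum>j=1..K. P i j * hi)"
    by (rule sum_mono) (use h Pnn[OF i] in \<open>auto intro: mult_left_mono\<close>)
  also have "\<dots> = hi" using Psum[OF i] by (simp add: sum_distrib_right[symmetric])
  finally show ?thesis .
qed

lemma A: "t \<le> tn \<Longrightarrow> i\<in>{1..K} \<Longrightarrow> V t i \<le> beta"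
proof (induction t arbitrary: i)
  case 0 then show ?case using b0 by simp
next
  case (Suc t)
  have w: "W t i \<le> beta" using Suc by (intro wsum_le) auto
  show ?case
  proof (rule Vsuc_le)
    fix e assume e: "e\<in>E"
    have z: "0 \<le> Z i e" "Z i e \<le> 1" using Zr[OF Suc.prems(2) e] by auto
    have "(1 - Z i e) * W t i \<le> (1 - Z i e) * beta" using z w by (intro mult_left_mono) auto
    moreover have "0 \<le> lam * e" using lam Enn[OF e] by simp
    ultimately show "-lam*e + Z i e * (if Suc t \<le> tn then beta else p*beta)
      + (if Suc t = tn+1 then p else 1)*(1 - Z i e)*W t i \<le> beta"
      using Suc.prems by (simp add: algebra_simps)
  qed
qed

lemma B: "i\<in>{1..K} \<Longrightarrow> 0 \<le> V t i"
proof (induction t arbitrary: i)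
  case 0 then show ?case by simp
next
  case (Suc t)
  have w: "0 \<le> W t i" using Suc by (intro wsum_ge) auto
  have "(if Suc t = tn+1 then p else 1)*(1 - Z i 0)*W t i \<le> V (Suc t) i"
    using Vsuc_ge[OF E0, of i t] Z0[OF Suc.prems] by simp
  moreover have "0 \<le> (if Suc t = tn+1 then p else 1)*(1 - Z i 0)*W t i"
    using w p0 Z0[OF Suc.prems] by simp
  ultimately show ?case by linarith
qed

lemma C: "tn+1 \<le> t \<Longrightarrow> i\<in>{1..K} \<Longrightarrow> V t i \<le> p*beta"
proof (induction t arbitrary: i rule: nat_induct_at_least)
  case base
  have w: "W tn i \<le> beta" using base A by (intro wsum_le) auto
  have "V (Suc tn) i \<le> p*beta"
  proof (rule Vsuc_le)
    fix e assume e: "e\<in>E"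
    have z: "0 \<le> Z i e" "Z i e \<le> 1" using Zr[OF base e] by auto
    have "p*((1 - Z i e) * W tn i) \<le> p*((1 - Z i e) * beta)" using z w p0 by (intro mult_left_mono) auto
    moreover have "0 \<le> lam * e" using lam Enn[OF e] by simp
    ultimately show "-lam*e + Z i e * (if Suc tn \<le> tn then beta else p*beta)
      + (if Suc tn = tn+1 then p else 1)*(1 - Z i e)*W tn i \<le> p*beta"
      by (simp add: algebra_simps)
  qed
  then show ?case by simp
next
  case (Suc t)
  have w: "W t i \<le> p*beta" using Suc by (intro wsum_le) auto
  show ?case
  proof (rule Vsuc_le)
    fix e assume e: "e\<in>E"
    have z: "0 \<le> Z i e" "Z i e \<le> 1" using Zr[OF Suc.prems e] by auto
    have "(1 - Z i e) * W t i \<le> (1 - Z i e) * (p*beta)" using z w by (intro mult_left_mono) auto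
    moreover have "0 \<le> lam * e" using lam Enn[OF e] by simp
    ultimately show "-lam*e + Z i e * (if Suc t \<le> tn then beta else p*beta)
      + (if Suc t = tn+1 then p else 1)*(1 - Z i e)*W t i \<le> p*beta"
      using Suc.hyps by (simp add: algebra_simps)
  qed
qed


abbreviation L where "L e t \<equiv> geomf (Z imin e) t * (-lam*e + Z imin e * beta)"

lemma D: "e\<in>E \<Longrightarrow> 0<e \<Longrightarrow> t \<le> tn \<Longrightarrow> i\<in>{1..K} \<Longrightarrow> L e t \<le> V t i"
proof (induction t arbitrary: i)
  case 0 then show ?case using B by simp
next
  case (Suc t)
  define z where "z = Z imin e"
  define zi where "zi = Z i e"
  define w where "w = W t i"
  have w1: "w \<le> beta" unfolding w_def using Suc A by (intro wsum_le) auto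
  have w2: "L e t \<le> w" unfolding w_def using Suc by (intro wsum_ge) auto
  have zz: "0 < z" "z \<le> zi" "zi \<le> 1"
    using Zpos[OF imin_in Suc.prems(1,2)] imin_min[OF Suc.prems(4,1)] Zr[OF Suc.prems(4,1)]
    by (auto simp: z_def zi_def)
  have v: "-lam*e + zi*beta + (1-zi)*w \<le> V (Suc t) i"
    using Vsuc_ge[OF Suc.prems(1), of i t] Suc.prems(3) by (simp add: zi_def w_def)
  have "0 \<le> (zi - z)*(beta - w)" using zz w1 by simp
  moreover have "zi*beta + (1-zi)*w - (z*beta+(1-z)*w) = (zi-z)*(beta-w)" by (simp add: algebra_simps)
  moreover have "(1-z)*L e t \<le> (1-z)*w" using zz w2 by (intro mult_left_mono) auto
  moreover have "L e (Suc t) = -lam*e + z*beta + (1-z)*L e t"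
    using zz by (simp add: geomf_Suc z_def algebra_simps)
  ultimately show ?case using v by linarith
qed

lemma Vl_le: "t \<le> tn \<Longrightarrow> i\<in>{1..K} \<Longrightarrow> Vl E (Z imin) lam beta t \<le> V t i"
proof (cases "t = 0")
  case True
  assume "i\<in>{1..K}" then show ?thesis using True B by (simp add: Vl_def)
next
  case False
  assume h: "t \<le> tn" "i\<in>{1..K}"
  have ne: "{e\<in>E. 0<e} \<noteq> {}" using Epos by auto
  show ?thesis unfolding Vl_def using False
    by (simp, intro Max.boundedI) (use fin ne D h in auto)
qed

abbreviation U where "U s \<equiv> Max ((\<lambda>e. - lam * e + Z imax e * (beta - max 0 (Vl E (Z imin) lam beta s))) ` E)"

lemma U_ge: "e\<in>E \<Longrightarrow> - lam * e + Z imax e * (beta - max 0 (Vl E (Z imin) lam beta s)) \<le> U s"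
  using fin by (auto intro!: Max_ge)

lemma Eu: "t \<le> tn \<Longrightarrow> i\<in>{1..K} \<Longrightarrow> V t i \<le> (\<Sum>z=1..t. U (z-1))"
proof (induction t arbitrary: i)
  case 0 then show ?case by simp
next
  case (Suc t)
  define M where "M = max 0 (Vl E (Z imin) lam beta t)"
  define w where "w = W t i"
  have w1: "w \<le> beta" unfolding w_def using Suc A by (intro wsum_le) auto
  have w2: "M \<le> w" unfolding w_def M_def using Suc B Vl_le by (intro wsum_ge) auto
  have w3: "w \<le> (\<Sum>z=1..t. U (z-1))" unfolding w_def using Suc by (intro wsum_le) auto
  have "V (Suc t) i \<le> w + U t"
  proof (rule Vsuc_le)
    fix e assume e: "e \<in> E"
    have zz: "0 \<le> Z imax e" "Z i e \<le> Z imax e" "0 \<le> Z i e"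
      using Zr[OF imax_in e] imax_max[OF Suc.prems(2) e] Zr[OF Suc.prems(2) e] by auto
    have "Z i e * (beta - w) \<le> Z imax e * (beta - w)" using zz w1 by (intro mult_right_mono) auto
    also have "\<dots> \<le> Z imax e * (beta - M)" using zz w2 by (intro mult_left_mono) auto
    finally have a: "Z i e * (beta - w) \<le> Z imax e * (beta - M)" .
    have b: "-lam*e + Z imax e * (beta - M) \<le> U t" using U_ge[OF e] by (simp add: M_def)
    have "-lam*e + Z i e * beta + (1 - Z i e)*w = w + (-lam*e + Z i e * (beta - w))" by (simp add: algebra_simps)
    then show "-lam*e + Z i e * (if Suc t \<le> tn then beta else p*beta)
      + (if Suc t = tn+1 then p else 1)*(1 - Z i e)*W t i \<le> w + U t"
      using Suc.prems a b by (simp add: w_def)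
  qed
  then show ?case using w3 by simp
qed

abbreviation Lt where "Lt e t \<equiv> - (1 - p) * geomf (Z imin e) (t - tn) * lam * e
               + p * geomf (Z imin e) t * (- lam * e + Z imin e * beta)"

lemma F: "tn+1 \<le> t \<Longrightarrow> e\<in>E \<Longrightarrow> 0<e \<Longrightarrow> i\<in>{1..K} \<Longrightarrow> Lt e t \<le> V t i"
proof (induction t arbitrary: i rule: nat_induct_at_least)
  case base
  define z where "z = Z imin e"
  define zi where "zi = Z i e"
  define w where "w = W tn i"
  have w1: "w \<le> beta" unfolding w_def using base A by (intro wsum_le) auto
  have w2: "L e tn \<le> w" unfolding w_def using base D by (intro wsum_ge) auto
  have zz: "0 < z" "z \<le> zi" "zi \<le> 1"
    using Zpos[OF imin_in base(1,2)] imin_min[OF base(3,1)] Zr[OF base(3,1)]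
    by (auto simp: z_def zi_def)
  have v: "-lam*e + zi*(p*beta) + p*(1-zi)*w \<le> V (Suc tn) i"
    using Vsuc_ge[OF base(1), of i tn] by (simp add: zi_def w_def)
  have "0 \<le> p*((zi - z)*(beta - w))" using zz w1 p0 by simp
  moreover have "zi*(p*beta) + p*(1-zi)*w - (z*(p*beta)+p*(1-z)*w) = p*((zi-z)*(beta-w))" by (simp add: algebra_simps)
  moreover have "(p*(1-z))*L e tn \<le> (p*(1-z))*w" using zz w2 p0 by (intro mult_left_mono) auto
  moreover have "Lt e (Suc tn) = -lam*e + z*(p*beta) + (p*(1-z))*L e tn"
    using zz by (simp add: geomf_Suc z_def algebra_simps)
  ultimately show ?case using v by simp
next
  case (Suc t)
  define z where "z = Z imin e"
  define zi where "zi = Z i e"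
  define w where "w = W t i"
  have w1: "w \<le> p*beta" unfolding w_def using Suc C by (intro wsum_le) auto
  have w2: "Lt e t \<le> w" unfolding w_def using Suc by (intro wsum_ge) auto
  have zz: "0 < z" "z \<le> zi" "zi \<le> 1"
    using Zpos[OF imin_in Suc.prems(1,2)] imin_min[OF Suc.prems(3,1)] Zr[OF Suc.prems(3,1)]
    by (auto simp: z_def zi_def)
  have v: "-lam*e + zi*(p*beta) + (1-zi)*w \<le> V (Suc t) i"
    using Vsuc_ge[OF Suc.prems(1), of i t] Suc.hyps by (simp add: zi_def w_def)
  have "0 \<le> (zi - z)*(p*beta - w)" using zz w1 by simp
  moreover have "zi*(p*beta) + (1-zi)*w - (z*(p*beta)+(1-z)*w) = (zi-z)*(p*beta-w)" by (simp add: algebra_simps)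
  moreover have "(1-z)*Lt e t \<le> (1-z)*w" using zz w2 by (intro mult_left_mono) auto
  moreover have "Suc t - tn = Suc (t - tn)" using Suc.hyps by simp
  moreover have "Lt e (Suc t) = -lam*e + z*(p*beta) + (1-z)*Lt e t"
    using zz \<open>Suc t - tn = Suc (t - tn)\<close> by (simp add: geomf_Suc z_def algebra_simps)
  ultimately show ?case using v by linarith
qed


abbreviation Vt where "Vt t \<equiv> Vtl E (Z imin) lam p beta tn t"

lemma Fp: "tn+1 \<le> t \<Longrightarrow> i\<in>{1..K} \<Longrightarrow> Vt t \<le> V t i"
proof -
  assume h: "tn+1 \<le> t" "i\<in>{1..K}"
  have ne: "{e\<in>E. 0<e} \<noteq> {}" using Epos by auto
  show ?thesis unfolding Vtl_def
    by (intro Max.boundedI) (use fin ne F h in auto)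
qed

lemma G: "Vt tn \<le> p * max 0 (Vl E (Z imin) lam beta tn)"
proof -
  have ne: "{e\<in>E. 0<e} \<noteq> {}" using Epos by auto
  have "Vt tn \<le> p * Vl E (Z imin) lam beta tn"
    unfolding Vtl_def
  proof (intro Max.boundedI)
    show "finite ((\<lambda>e. - (1 - p) * geomf (Z imin e) (tn - tn) * lam * e +
           p * geomf (Z imin e) tn * (- lam * e + Z imin e * beta)) ` {e \<in> E. 0 < e})" using fin by simp
    show "(\<lambda>e. - (1 - p) * geomf (Z imin e) (tn - tn) * lam * e +
           p * geomf (Z imin e) tn * (- lam * e + Z imin e * beta)) ` {e \<in> E. 0 < e} \<noteq> {}" using ne by simp
    fix x assume "x \<in> (\<lambda>e. - (1 - p) * geomf (Z imin e) (tn - tn) * lam * e +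
           p * geomf (Z imin e) tn * (- lam * e + Z imin e * beta)) ` {e \<in> E. 0 < e}"
    then obtain e where e: "e\<in>E" "0<e" and x: "x = p * L e tn" by auto
    have "L e tn \<le> Vl E (Z imin) lam beta tn" unfolding Vl_def using tn1 fin e
      by (auto intro!: Max_ge)
    then show "x \<le> p * Vl E (Z imin) lam beta tn" using x p0 by (simp add: mult_left_mono)
  qed
  also have "\<dots> \<le> p * max 0 (Vl E (Z imin) lam beta tn)" using p0 by (simp add: mult_left_mono)
  finally show ?thesis .
qed

lemma G2: "tn+1 \<le> t \<Longrightarrow> i\<in>{1..K} \<Longrightarrow> p * max 0 (Vl E (Z imin) lam beta tn) \<le> V t i"
proof (induction t arbitrary: i rule: nat_induct_at_least)
  case base
  have w: "max 0 (Vl E (Z imin) lam beta tn) \<le> W tn i" using base B Vl_le by (intro wsum_ge) auto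
  have "p * W tn i \<le> V (Suc tn) i" using Vsuc_ge[OF E0, of i tn] Z0[OF base] by simp
  then show ?case using w p0 mult_left_mono[OF w p0] by simp
next
  case (Suc t)
  have w: "p * max 0 (Vl E (Z imin) lam beta tn) \<le> W t i" using Suc by (intro wsum_ge) auto
  have "W t i \<le> V (Suc t) i" using Vsuc_ge[OF E0, of i t] Z0[OF Suc.prems] Suc.hyps by simp
  then show ?case using w by simp
qed

abbreviation U2 where "U2 s \<equiv> Max ((\<lambda>e. - lam * e + Z imax e *
         (p * beta - max 0 (max (Vt tn) (Vt s)))) ` E)"

lemma U2_ge: "e\<in>E \<Longrightarrow> - lam * e + Z imax e * (p * beta - max 0 (max (Vt tn) (Vt s))) \<le> U2 s"
  using fin by (auto intro!: Max_ge)

lemma H: "tn+1 \<le> t \<Longrightarrow> i\<in>{1..K} \<Longrightarrow> V t i \<le> (\<Sum>z=tn+1..t. U2 (z-1)) + p * (\<Sum>z=1..tn. U (z-1))"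
proof (induction t arbitrary: i rule: nat_induct_at_least)
  case base
  define S where "S = (\<Sum>z=1..tn. U (z-1))"
  define M where "M = max 0 (max (Vt tn) (Vt tn))"
  define w where "w = W tn i"
  have w1: "w \<le> beta" unfolding w_def using base A by (intro wsum_le) auto
  have w0: "max 0 (Vl E (Z imin) lam beta tn) \<le> w" unfolding w_def using base B Vl_le by (intro wsum_ge) auto
  have w2: "M \<le> p*w" unfolding M_def using G w0 p0 mult_left_mono[OF w0 p0] by auto
  have w3: "w \<le> S" unfolding w_def S_def using base Eu by (intro wsum_le) auto
  have "V (Suc tn) i \<le> p*w + U2 tn"
  proof (rule Vsuc_le)
    fix e assume e: "e \<in> E"
    have zz: "0 \<le> Z imax e" "Z i e \<le> Z imax e" "0 \<le> Z i e"
      using Zr[OF imax_in e] imax_max[OF base e] Zr[OF base e] by auto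
    have "Z i e * (p*beta - p*w) \<le> Z imax e * (p*beta - p*w)" using zz w1 p0
      by (intro mult_right_mono) (auto simp: mult_left_mono)
    also have "\<dots> \<le> Z imax e * (p*beta - M)" using zz w2 by (intro mult_left_mono) auto
    finally have a: "Z i e * (p*beta - p*w) \<le> Z imax e * (p*beta - M)" .
    have b: "-lam*e + Z imax e * (p*beta - M) \<le> U2 tn" using U2_ge[OF e, of tn] unfolding M_def by simp
    have "-lam*e + Z i e * (p*beta) + p*(1 - Z i e)*w = p*w + (-lam*e + Z i e * (p*beta - p*w))" by (simp add: algebra_simps)
    then show "-lam*e + Z i e * (if Suc tn \<le> tn then beta else p*beta)
      + (if Suc tn = tn+1 then p else 1)*(1 - Z i e)*W tn i \<le> p*w + U2 tn"
      using a b by (simp add: w_def)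
  qed
  moreover have "p*w \<le> p*S" using w3 p0 by (simp add: mult_left_mono)
  ultimately show ?case by (simp add: S_def)
next
  case (Suc t)
  define M where "M = max 0 (max (Vt tn) (Vt t))"
  define w where "w = W t i"
  have w1: "w \<le> p*beta" unfolding w_def using Suc C by (intro wsum_le) auto
  have w2: "M \<le> w" unfolding w_def M_def using Suc B Fp G G2
    by (intro wsum_ge) (auto intro: order_trans)
  have w3: "w \<le> (\<Sum>z=tn+1..t. U2 (z-1)) + p * (\<Sum>z=1..tn. U (z-1))" unfolding w_def using Suc by (intro wsum_le) auto
  have "V (Suc t) i \<le> w + U2 t"
  proof (rule Vsuc_le)
    fix e assume e: "e \<in> E"
    have zz: "0 \<le> Z imax e" "Z i e \<le> Z imax e" "0 \<le> Z i e"
      using Zr[OF imax_in e] imax_max[OF Suc.prems e] Zr[OF Suc.prems e] by auto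
    have "Z i e * (p*beta - w) \<le> Z imax e * (p*beta - w)" using zz w1 by (intro mult_right_mono) auto
    also have "\<dots> \<le> Z imax e * (p*beta - M)" using zz w2 by (intro mult_left_mono) auto
    finally have a: "Z i e * (p*beta - w) \<le> Z imax e * (p*beta - M)" .
    have b: "-lam*e + Z imax e * (p*beta - M) \<le> U2 t" using U2_ge[OF e] by (simp add: M_def)
    have "-lam*e + Z i e * (p*beta) + (1 - Z i e)*w = w + (-lam*e + Z i e * (p*beta - w))" by (simp add: algebra_simps)
    then show "-lam*e + Z i e * (if Suc t \<le> tn then beta else p*beta)
      + (if Suc t = tn+1 then p else 1)*(1 - Z i e)*W t i \<le> w + U2 t"
      using Suc.hyps a b by (simp add: w_def)
  qed
  then show ?case using w3 Suc.hyps by simp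
qed

lemma low1: "i\<in>{1..K} \<Longrightarrow> max 0 (Vl E (Z imin) lam beta tn) \<le> V tn i"
  using B Vl_le by simp

lemma up1: "i\<in>{1..K} \<Longrightarrow> V tn i \<le> min beta (Vu E (Z imax) (Z imin) lam beta tn)"
  using A Eu unfolding Vu_def by simp

lemma low2: "1 \<le> Dn \<Longrightarrow> i\<in>{1..K} \<Longrightarrow> max 0 (max (Vt tn) (Vt (tn+Dn))) \<le> V (tn+Dn) i"
  using B[of i "tn+Dn"] Fp[of "tn+Dn" i] G G2[of "tn+Dn" i] by auto

lemma up2: "1 \<le> Dn \<Longrightarrow> i\<in>{1..K} \<Longrightarrow> V (tn+Dn) i \<le> min (p*beta) (Vtu E (Z imax) (Z imin) lam p beta tn (tn+Dn))"
  using C[of "tn+Dn" i] H[of "tn+Dn" i] unfolding Vtu_def by simp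

end

lemma esum: assumes "\<And>i. i\<in>{1..k} \<Longrightarrow> 0 \<le> (h::nat\<Rightarrow>real) i" "(\<Sum>i=1..k. h i) = 1"
  "\<And>i. i\<in>{1..k} \<Longrightarrow> lo \<le> f i \<and> f i \<le> hi"
  shows "lo \<le> (\<Sum>i=1..k. h i * f i) \<and> (\<Sum>i=1..k. h i * f i) \<le> hi"
proof
  have "lo = (\<Sum>i=1..k. h i * lo)" using assms(2) by (simp add: sum_distrib_right[symmetric])
  also have "\<dots> \<le> (\<Sum>i=1..k. h i * f i)"
    by (rule sum_mono) (use assms in \<open>auto intro: mult_left_mono\<close>)
  finally show "lo \<le> (\<Sum>i=1..k. h i * f i)" .
  have "(\<Sum>i=1..k. h i * f i) \<le> (\<Sum>i=1..k. h i * hi)"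
    by (rule sum_mono) (use assms in \<open>auto intro: mult_left_mono\<close>)
  also have "\<dots> = hi" using assms(2) by (simp add: sum_distrib_right[symmetric])
  finally show "(\<Sum>i=1..k. h i * f i) \<le> hi" .
qed

theorem corollary4:
  fixes N :: nat and B amax :: real
    and a p q beta :: "nat \<Rightarrow> real"
    and eta :: "nat \<Rightarrow> nat \<Rightarrow> real"
    and tau D K imin imax :: "nat \<Rightarrow> nat"
    and P :: "nat \<Rightarrow> nat \<Rightarrow> nat \<Rightarrow> real"
    and E :: "real set"
    and zeta :: "nat \<Rightarrow> nat \<Rightarrow> real \<Rightarrow> real"
  assumes B_pos: "B > 0" and amax_pos: "amax > 0"
    and E_fin: "finite E" and E_nonneg: "E \<subseteq> {0..}" and E_0: "0 \<in> E"
    and E_pos: "\<exists>e\<in>E. e > 0"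
    and a_nonneg: "\<And>n. n < N \<Longrightarrow> a n \<ge> 0"
    and pq: "\<And>n. n < N \<Longrightarrow> 0 \<le> q n \<and> q n < p n \<and> p n \<le> 1"
    and a_range: "\<And>n. n < N \<Longrightarrow> q n \<le> a n / amax \<and> a n / amax \<le> p n"
    and K_pos: "\<And>n. n < N \<Longrightarrow> K n \<ge> 1"
    and eta_nonneg: "\<And>n i. n < N \<Longrightarrow> i \<in> {1..K n} \<Longrightarrow> eta n i \<ge> 0"
    and eta_sum: "\<And>n. n < N \<Longrightarrow> (\<Sum>i=1..K n. eta n i) = 1"
    and beta_nonneg: "\<And>n. n < N \<Longrightarrow> beta n \<ge> 0"
    and tau_pos: "\<And>n. n < N \<Longrightarrow> tau n \<ge> 1"
    and D_pos: "\<And>n. n < N \<Longrightarrow> D n \<ge> 1"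
    and P_nonneg: "\<And>n i j. n < N \<Longrightarrow> i \<in> {1..K n} \<Longrightarrow> j \<in> {1..K n} \<Longrightarrow> P n i j \<ge> 0"
    and P_sum: "\<And>n i. n < N \<Longrightarrow> i \<in> {1..K n} \<Longrightarrow> (\<Sum>j=1..K n. P n i j) = 1"
    and zeta_range: "\<And>n i e. n < N \<Longrightarrow> i \<in> {1..K n} \<Longrightarrow> e \<in> E \<Longrightarrow> 0 \<le> zeta n i e \<and> zeta n i e \<le> 1"
    and zeta_0: "\<And>n i. n < N \<Longrightarrow> i \<in> {1..K n} \<Longrightarrow> zeta n i 0 = 0"
    and zeta_pos: "\<And>n i e. n < N \<Longrightarrow> i \<in> {1..K n} \<Longrightarrow> e \<in> E \<Longrightarrow> e > 0 \<Longrightarrow> zeta n i e > 0"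
    and zeta_mono: "\<And>n i e e'. n < N \<Longrightarrow> i \<in> {1..K n} \<Longrightarrow> e \<in> E \<Longrightarrow> e' \<in> E \<Longrightarrow> e < e'
                      \<Longrightarrow> zeta n i e < zeta n i e'"
    and zeta_total: "\<And>n i j. n < N \<Longrightarrow> i \<in> {1..K n} \<Longrightarrow> j \<in> {1..K n} \<Longrightarrow>
                      (\<forall>e\<in>E. zeta n i e \<ge> zeta n j e) \<or> (\<forall>e\<in>E. zeta n i e \<le> zeta n j e)"
    and imax_in: "\<And>n. n < N \<Longrightarrow> imax n \<in> {1..K n}"
    and imin_in: "\<And>n. n < N \<Longrightarrow> imin n \<in> {1..K n}"
    and imax_max: "\<And>n i e. n < N \<Longrightarrow> i \<in> {1..K n} \<Longrightarrow> e \<in> E \<Longrightarrow> zeta n i e \<le> zeta n (imax n) e"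
    and imin_min: "\<And>n i e. n < N \<Longrightarrow> i \<in> {1..K n} \<Longrightarrow> e \<in> E \<Longrightarrow> zeta n (imin n) e \<le> zeta n i e"
  shows "(\<forall>lam\<ge>0.
            gIl N B amax a p q beta tau D E zeta imin lam \<le> gI N B amax a p q eta beta tau D K P E zeta lam
          \<and> gI N B amax a p q eta beta tau D K P E zeta lam \<le> gIu N B amax a p q beta tau D E zeta imin imax lam)
       \<and> (INF lam\<in>{0..}. gIl N B amax a p q beta tau D E zeta imin lam)
            \<le> (INF lam\<in>{0..}. gI N B amax a p q eta beta tau D K P E zeta lam)
       \<and> (INF lam\<in>{0..}. gI N B amax a p q eta beta tau D K P E zeta lam)
            \<le> (INF lam\<in>{0..}. gIu N B amax a p q beta tau D E zeta imin imax lam)"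
proof -
  have coef: "0 \<le> atil amax (a n) (p n) (q n) \<and> 0 \<le> (amax - atil amax (a n) (p n) (q n)) * q n" if n: "n < N" for n
  proof -
    have h1: "amax * q n \<le> a n" "a n \<le> amax * p n" using a_range[OF n] amax_pos
      by (auto simp: field_simps)
    have pq': "0 < p n - q n" "0 \<le> q n" using pq[OF n] by auto
    have "atil amax (a n) (p n) (q n) \<le> amax" unfolding atil_def using h1 pq'
      by (simp add: divide_le_eq algebra_simps)
    moreover have "0 \<le> atil amax (a n) (p n) (q n)" unfolding atil_def using h1 pq' by simp
    ultimately show ?thesis using pq' by simp
  qed
  have user: "max 0 (max (Vtl E (zeta n (imin n)) lam (p n) (beta n) (tau n) (tau n))
        (Vtl E (zeta n (imin n)) lam (p n) (beta n) (tau n) (tau n + D n)))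
      \<le> (\<Sum>i=1..K n. eta n i * VI E (zeta n) (P n) (K n) lam (p n) (beta n) (tau n) (tau n + D n) i)
    \<and> (\<Sum>i=1..K n. eta n i * VI E (zeta n) (P n) (K n) lam (p n) (beta n) (tau n) (tau n + D n) i)
      \<le> min (p n * beta n) (Vtu E (zeta n (imax n)) (zeta n (imin n)) lam (p n) (beta n) (tau n) (tau n + D n))
    \<and> max 0 (Vl E (zeta n (imin n)) lam (beta n) (tau n))
      \<le> (\<Sum>i=1..K n. eta n i * VI E (zeta n) (P n) (K n) lam (p n) (beta n) (tau n) (tau n) i)
    \<and> (\<Sum>i=1..K n. eta n i * VI E (zeta n) (P n) (K n) lam (p n) (beta n) (tau n) (tau n) i)
      \<le> min (beta n) (Vu E (zeta n (imax n)) (zeta n (imin n)) lam (beta n) (tau n))"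
    if n: "n < N" and lam: "lam \<ge> 0" for n lam
  proof -
    interpret u: usr E "zeta n" "P n" "K n" lam "p n" "beta n" "tau n" "imin n" "imax n"
      apply unfold_locales
      using E_fin E_nonneg E_0 E_pos lam pq[OF n] beta_nonneg[OF n] tau_pos[OF n] P_nonneg[OF n]
        P_sum[OF n] zeta_range[OF n] zeta_0[OF n] zeta_pos[OF n] imax_in[OF n] imin_in[OF n]
        imax_max[OF n] imin_min[OF n]
      by auto
    show ?thesis
      using esum[OF eta_nonneg[OF n] eta_sum[OF n], of "max 0 (max (Vtl E (zeta n (imin n)) lam (p n) (beta n) (tau n) (tau n))
        (Vtl E (zeta n (imin n)) lam (p n) (beta n) (tau n) (tau n + D n)))"
        "\<lambda>i. VI E (zeta n) (P n) (K n) lam (p n) (beta n) (tau n) (tau n + D n) i"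
        "min (p n * beta n) (Vtu E (zeta n (imax n)) (zeta n (imin n)) lam (p n) (beta n) (tau n) (tau n + D n))"]
        esum[OF eta_nonneg[OF n] eta_sum[OF n], of "max 0 (Vl E (zeta n (imin n)) lam (beta n) (tau n))"
        "\<lambda>i. VI E (zeta n) (P n) (K n) lam (p n) (beta n) (tau n) (tau n) i"
        "min (beta n) (Vu E (zeta n (imax n)) (zeta n (imin n)) lam (beta n) (tau n))"]
        u.low1 u.up1 u.low2[OF D_pos[OF n]] u.up2[OF D_pos[OF n]]
      by auto
  qed
  have pw: "gIl N B amax a p q beta tau D E zeta imin lam \<le> gI N B amax a p q eta beta tau D K P E zeta lam
          \<and> gI N B amax a p q eta beta tau D K P E zeta lam \<le> gIu N B amax a p q beta tau D E zeta imin imax lam"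
    if lam: "lam \<ge> 0" for lam
  proof
    show "gIl N B amax a p q beta tau D E zeta imin lam \<le> gI N B amax a p q eta beta tau D K P E zeta lam"
      unfolding gIl_def gI_def
      apply (rule add_left_mono, rule sum_mono, rule add_mono)
      using coef user[OF _ lam] by (auto intro: mult_left_mono)
    show "gI N B amax a p q eta beta tau D K P E zeta lam \<le> gIu N B amax a p q beta tau D E zeta imin imax lam"
      unfolding gIu_def gI_def
      apply (rule add_left_mono, rule sum_mono, rule add_mono)
      using coef user[OF _ lam] by (auto intro: mult_left_mono)
  qed
  have nn: "0 \<le> gIl N B amax a p q beta tau D E zeta imin lam" if lam: "lam \<ge> 0" for lam
    unfolding gIl_def
  proof (intro add_nonneg_nonneg sum_nonneg)
    show "0 \<le> lam * B" using lam B_pos by simp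
  next
    fix n assume "n \<in> {..<N}"
    then have c: "0 \<le> atil amax (a n) (p n) (q n) \<and> 0 \<le> (amax - atil amax (a n) (p n) (q n)) * q n"
      using coef by simp
    show "0 \<le> atil amax (a n) (p n) (q n) * max 0 (max (Vtl E (zeta n (imin n)) lam (p n) (beta n) (tau n) (tau n))
                   (Vtl E (zeta n (imin n)) lam (p n) (beta n) (tau n) (tau n + D n)))"
      by (rule mult_nonneg_nonneg) (use c in auto)
    show "0 \<le> (amax - atil amax (a n) (p n) (q n)) * q n * max 0 (Vl E (zeta n (imin n)) lam (beta n) (tau n))"
      by (rule mult_nonneg_nonneg) (use c in auto)
  qed
  have bl: "bdd_below ((\<lambda>lam. gIl N B amax a p q beta tau D E zeta imin lam) ` {0..})"
    using nn by (intro bdd_belowI[of _ 0]) auto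
  have bm: "bdd_below ((\<lambda>lam. gI N B amax a p q eta beta tau D K P E zeta lam) ` {0..})"
    using nn pw by (intro bdd_belowI[of _ 0]) (force intro: order_trans)
  show ?thesis
  proof (intro conjI)
    show "\<forall>lam\<ge>0. gIl N B amax a p q beta tau D E zeta imin lam \<le> gI N B amax a p q eta beta tau D K P E zeta lam
          \<and> gI N B amax a p q eta beta tau D K P E zeta lam \<le> gIu N B amax a p q beta tau D E zeta imin imax lam"
      using pw by blast
    show "(INF lam\<in>{0..}. gIl N B amax a p q beta tau D E zeta imin lam)
            \<le> (INF lam\<in>{0..}. gI N B amax a p q eta beta tau D K P E zeta lam)"
      by (rule cINF_mono) (use bl pw in auto)
    show "(INF lam\<in>{0..}. gI N B amax a p q eta beta tau D K P E zeta lam)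
            \<le> (INF lam\<in>{0..}. gIu N B amax a p q beta tau D E zeta imin imax lam)"
      by (rule cINF_mono) (use bm pw in auto)
  qed
qed

end
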